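(* If $A=(A_n)_{n=0}^\infty$ is an Appell sequence, then (a) the sequence $A^*=(A^*_n)_{n=0}^\infty$ defined by $A^*_n=A_{(1^n)}$ is also an Appell sequence; (b) the Wronskian Appell polynomials for $A$ and $A^*$ satisfy $A^*_\lambda=A_{\lambda'}$ for all partitions $\lambda$, where $\lambda'$ is the conjugate partition; (c) the exponential generating functions satisfy $f_{A^*}(t)=1/f_A(-t)$, or equivalently, $\log f_A(t)=\sum_{k=1}^\infty c_k\frac{t^k}{k!}$ implies $\log f_{A^*}(t)=\sum_{k=1}^\infty (-1)^{k-1}c_k\frac{t^k}{k!}$.
   Context: An Appell sequence is a sequence of polynomials $(A_n)_{n\ge0}$ with $A_0=1$ and $A_n'=nA_{n-1}$ for $n\ge1$; it satisfies $\sum_k A_k(x)t^k/k!=e^{xt}f_A(t)$ for a formal power series $f_A$ with $f_A(0)=1$. For a partition $\lambda$ of length $r$, let $(n_1,\dots,n_r)=(\lambda_r,\lambda_{r-1}+1,\dots,\lambda_1+r-1)$ and $A_\lambda=\operatorname{Wr}[A_{n_1},\dots,A_{n_r}]/\Delta(n_1,\dots,n_r)$, where $\operatorname{Wr}$ is the Wronskian and $\Delta$ the Vandermonde determinant $\prod_{i<j}(x_j-x_i)$. $(1^n)=(1,\dots,1)$ ($n$ ones). *)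

theory Defs
  imports "HOL-Computational_Algebra.Polynomial" "HOL-Computational_Algebra.Formal_Power_Series"
    "Jordan_Normal_Form.Determinant"
begin

definition appell :: "(nat \<Rightarrow> 'a::field_char_0 poly) \<Rightarrow> bool" where
  "appell A \<longleftrightarrow> A 0 = 1 \<and> (\<forall>n\<ge>1. pderiv (A n) = smult (of_nat n) (A (n - 1)))"

text \<open>f is the series f_A: sum_k A_k(x) t^k/k! = e^{xt} f(t), as formal power series in t
  with polynomial coefficients in x.\<close>
definition appell_egf :: "(nat \<Rightarrow> 'a::field_char_0 poly) \<Rightarrow> 'a fps \<Rightarrow> bool" where
  "appell_egf A f \<longleftrightarrow> fps_nth f 0 = 1 \<and>
     Abs_fps (\<lambda>k. smult (inverse (fact k)) (A k)) =
     Abs_fps (\<lambda>k. monom (inverse (fact k)) k) * Abs_fps (\<lambda>k. [:fps_nth f k:])"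

definition is_partition :: "nat list \<Rightarrow> bool" where
  "is_partition lam \<longleftrightarrow> sorted_wrt (\<ge>) lam \<and> 0 \<notin> set lam"

definition conj_partition :: "nat list \<Rightarrow> nat list" where
  "conj_partition lam = map (\<lambda>j. length (filter (\<lambda>x. j \<le> x) lam)) [1..<Suc (fold max lam 0)]"

text \<open>(n_1,...,n_r) = (lam_r, lam_{r-1}+1, ..., lam_1 + r - 1), 0-indexed\<close>
definition part_seq :: "nat list \<Rightarrow> nat \<Rightarrow> nat" where
  "part_seq lam i = lam ! (length lam - 1 - i) + i"

definition wronskian :: "nat \<Rightarrow> (nat \<Rightarrow> 'a::idom poly) \<Rightarrow> 'a poly" where
  "wronskian r f = det (mat r r (\<lambda>(i, j). (pderiv ^^ i) (f j)))"

definition vandermonde :: "nat \<Rightarrow> (nat \<Rightarrow> nat) \<Rightarrow> int" where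
  "vandermonde r n = (\<Prod>j<r. \<Prod>i<j. int (n j) - int (n i))"

definition wronskian_appell :: "(nat \<Rightarrow> 'a::field_char_0 poly) \<Rightarrow> nat list \<Rightarrow> 'a poly" where
  "wronskian_appell A lam =
     smult (inverse (of_int (vandermonde (length lam) (part_seq lam))))
       (wronskian (length lam) (\<lambda>j. A (part_seq lam j)))"

definition appell_dual :: "(nat \<Rightarrow> 'a::field_char_0 poly) \<Rightarrow> nat \<Rightarrow> 'a poly" where
  "appell_dual A n = wronskian_appell A (replicate n 1)"

end

theory Submission
  imports Defs
begin

lemma det_permute_cols:
  assumes A: "A \<in> carrier_mat n n" and p: "p permutes {0..<n}"
  shows "det (mat n n (\<lambda>(i,j). A $$ (i, p j))) = signof p * det A"
proof -
  have "mat n n (\<lambda>(i,j). A $$ (i, p j)) = transpose_mat (mat n n (\<lambda>(i,j). transpose_mat A $$ (p i, j)))"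
    using A p by (auto intro!: eq_matI simp: permutes_in_image)
  hence "det (mat n n (\<lambda>(i,j). A $$ (i, p j))) = det (transpose_mat (mat n n (\<lambda>(i,j). transpose_mat A $$ (p i, j))))"
    by (simp only:)
  also have "\<dots> = det (mat n n (\<lambda>(i,j). transpose_mat A $$ (p i, j)))"
    by (rule det_transpose[of _ n]) simp
  also have "\<dots> = signof p * det (transpose_mat A)"
    by (rule det_permute_rows[OF _ p]) (use A in auto)
  finally show ?thesis using A by (simp add: det_transpose)
qed

lemma det_scale:
  fixes A :: "'b::comm_ring_1 mat"
  assumes A: "A \<in> carrier_mat n n"
  shows "det (mat n n (\<lambda>(i,j). u i * v j * A $$ (i,j))) = (\<Prod>i<n. u i) * (\<Prod>j<n. v j) * det A"
proof -
  have "det (mat n n (\<lambda>(i,j). u i * v j * A $$ (i,j))) =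
     (\<Sum>p\<in>{p. p permutes {0..<n}}. signof p * (\<Prod>i=0..<n. u i * v (p i) * A $$ (i, p i)))"
    by (subst det_def'[of _ n]) (auto intro!: sum.cong prod.cong)
  also have "\<dots> = (\<Sum>p\<in>{p. p permutes {0..<n}}. (\<Prod>i<n. u i) * (\<Prod>j<n. v j) * (signof p * (\<Prod>i=0..<n. A $$ (i, p i))))"
  proof (rule sum.cong, simp)
    fix p assume "p \<in> {p. p permutes {0..<n}}"
    hence p: "p permutes {0..<n}" by simp
    have "(\<Prod>i=0..<n. v (p i)) = (\<Prod>j=0..<n. v j)"
      using prod.permute[OF p, of v] by (simp add: comp_def)
    thus "signof p * (\<Prod>i=0..<n. u i * v (p i) * A $$ (i, p i)) =
      (\<Prod>i<n. u i) * (\<Prod>j<n. v j) * (signof p * (\<Prod>i=0..<n. A $$ (i, p i)))"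
      by (simp add: prod.distrib atLeast0LessThan)
  qed
  also have "\<dots> = (\<Prod>i<n. u i) * (\<Prod>j<n. v j) * det A"
    by (simp add: det_def'[OF A] sum_distrib_left)
  finally show ?thesis .
qed

lemma jacobi_minor:
  fixes H E :: "'b::idom mat"
  assumes H: "H \<in> carrier_mat N N" and E: "E \<in> carrier_mat N N" and HE: "H * E = 1\<^sub>m N"
    and s: "s permutes {0..<N}" and rN: "r \<le> N"
  shows "det (mat r r (\<lambda>(i,j). H $$ (i, s j))) =
     signof s * det H * det (mat (N-r) (N-r) (\<lambda>(k,l). E $$ (s (r+k), r+l)))"
proof -
  define m where "m = N - r"
  have Nm: "N = r + m" using rN m_def by simp
  define P where "P = mat N N (\<lambda>(i,j). H $$ (i, s j))"
  define Q where "Q = mat N N (\<lambda>(i,j). E $$ (s i, j))"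
  have sN: "\<And>i. i < N \<Longrightarrow> s i < N" using s by (simp add: permutes_in_image)
  have PQ: "P * Q = 1\<^sub>m N"
  proof (rule eq_matI)
    fix i j assume ij: "i < dim_row (1\<^sub>m N)" "j < dim_col (1\<^sub>m N)"
    have "(P * Q) $$ (i,j) = (\<Sum>k=0..<N. H $$ (i, s k) * E $$ (s k, j))"
      using ij sN by (auto simp: P_def Q_def scalar_prod_def intro!: sum.cong)
    also have "\<dots> = (\<Sum>k=0..<N. H $$ (i, k) * E $$ (k, j))"
      using sum.permute[OF s, of "\<lambda>k. H $$ (i, k) * E $$ (k, j)"] by (simp add: comp_def)
    also have "\<dots> = (H * E) $$ (i,j)"
      using ij H E by (auto simp: scalar_prod_def)
    finally show "(P * Q) $$ (i,j) = 1\<^sub>m N $$ (i,j)" using HE by simp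
  qed (use H E in \<open>auto simp: P_def Q_def\<close>)
  define R where "R = mat N N (\<lambda>(i,j). if j < r then (if i = j then 1 else 0) else Q $$ (i,j))"
  have PR: "P * R = mat N N (\<lambda>(i,j). if j < r then P $$ (i,j) else (if i = j then 1 else 0))"
  proof (rule eq_matI)
    fix i j assume ij: "i < dim_row (mat N N (\<lambda>(i,j). if j < r then P $$ (i,j) else (if i = j then 1 else 0)))"
      "j < dim_col (mat N N (\<lambda>(i,j). if j < r then P $$ (i,j) else (if i = j then 1 else 0)))"
    hence i: "i < N" and j: "j < N" by simp_all
    have e: "(P * R) $$ (i,j) = (\<Sum>k=0..<N. P $$ (i,k) * R $$ (k,j))"
      using i j by (simp add: P_def R_def scalar_prod_def)
    show "(P * R) $$ (i,j) = mat N N (\<lambda>(i,j). if j < r then P $$ (i,j) else (if i = j then 1 else 0)) $$ (i,j)"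
    proof (cases "j < r")
      case True
      have "(\<Sum>k=0..<N. P $$ (i,k) * R $$ (k,j)) = (\<Sum>k=0..<N. if k = j then P $$ (i,j) else 0)"
        by (rule sum.cong) (use True j in \<open>auto simp: R_def\<close>)
      also have "\<dots> = P $$ (i,j)" using j by simp
      finally show ?thesis using e i j True by simp
    next
      case False
      have "(\<Sum>k=0..<N. P $$ (i,k) * R $$ (k,j)) = (\<Sum>k=0..<N. P $$ (i,k) * Q $$ (k,j))"
        by (rule sum.cong) (use False j in \<open>auto simp: R_def\<close>)
      also have "\<dots> = (P * Q) $$ (i,j)" using i j by (simp add: P_def Q_def scalar_prod_def)
      finally show ?thesis using e i j False PQ by simp
    qed
  qed (simp_all add: R_def P_def)
  have Pc: "P \<in> carrier_mat N N" and Rc: "R \<in> carrier_mat N N" by (auto simp: P_def R_def)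
  have detP: "det P = signof s * det H" unfolding P_def by (rule det_permute_cols[OF H s])
  have "R = four_block_mat (1\<^sub>m r) (mat r m (\<lambda>(i,j). Q $$ (i, r+j))) (0\<^sub>m m r)
      (mat m m (\<lambda>(i,j). Q $$ (r+i, r+j)))"
    by (rule eq_matI) (auto simp: R_def four_block_mat_def Nm)
  hence detR: "det R = det (mat m m (\<lambda>(i,j). Q $$ (r+i, r+j)))"
    by (simp add: det_four_block_mat_lower_left_zero[of _ r _ m])
  have "P * R = four_block_mat (mat r r (\<lambda>(i,j). P $$ (i,j))) (0\<^sub>m r m)
      (mat m r (\<lambda>(i,j). P $$ (r+i,j))) (1\<^sub>m m)"
    unfolding PR by (rule eq_matI) (auto simp: four_block_mat_def Nm)
  hence "det (P * R) = det (mat r r (\<lambda>(i,j). P $$ (i,j)))"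
    by (simp add: det_four_block_mat_upper_right_zero[of _ r _ m])
  moreover have "det (P * R) = det P * det R" by (rule det_mult[OF Pc Rc])
  moreover have "mat r r (\<lambda>(i,j). P $$ (i,j)) = mat r r (\<lambda>(i,j). H $$ (i, s j))"
    using Nm by (auto intro!: eq_matI simp: P_def)
  moreover have "mat m m (\<lambda>(i,j). Q $$ (r+i, r+j)) = mat m m (\<lambda>(k,l). E $$ (s (r+k), r+l))"
    using Nm by (auto intro!: eq_matI simp: Q_def)
  ultimately show ?thesis using detP detR m_def by simp
qed


definition tz :: "(nat \<Rightarrow> 'b::zero) \<Rightarrow> int \<Rightarrow> 'b" where
  "tz f m = (if m < 0 then 0 else f (nat m))"

lemma toeplitz_prod:
  fixes p q :: "nat \<Rightarrow> 'b::comm_ring_1"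
  assumes conv: "\<And>m. (\<Sum>a\<le>m. p a * q (m - a)) = (if m = 0 then 1 else 0)"
  shows "mat N N (\<lambda>(i,j). tz p (int j - int i)) * mat N N (\<lambda>(i,j). tz q (int j - int i)) = 1\<^sub>m N"
proof (rule eq_matI)
  fix i j assume "i < dim_row (1\<^sub>m N)" "j < dim_col (1\<^sub>m N)"
  hence i: "i < N" and j: "j < N" by simp_all
  have e: "(mat N N (\<lambda>(i,j). tz p (int j - int i)) * mat N N (\<lambda>(i,j). tz q (int j - int i))) $$ (i,j)
     = (\<Sum>k=0..<N. tz p (int k - int i) * tz q (int j - int k))"
    using i j by (simp add: scalar_prod_def)
  show "(mat N N (\<lambda>(i,j). tz p (int j - int i)) * mat N N (\<lambda>(i,j). tz q (int j - int i))) $$ (i,j) = 1\<^sub>m N $$ (i,j)"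
  proof (cases "i \<le> j")
    case False
    have "(\<Sum>k=0..<N. tz p (int k - int i) * tz q (int j - int k)) = 0"
      by (rule sum.neutral) (use False in \<open>auto simp: tz_def\<close>)
    thus ?thesis using e i j False by simp
  next
    case True
    have "(\<Sum>k=0..<N. tz p (int k - int i) * tz q (int j - int k)) = (\<Sum>k=i..j. tz p (int k - int i) * tz q (int j - int k))"
      by (rule sum.mono_neutral_right) (use True j in \<open>auto simp: tz_def\<close>)
    also have "\<dots> = (\<Sum>k=i..j. p (k - i) * q (j - k))"
      by (rule sum.cong) (auto simp: tz_def nat_diff_distrib)
    also have "\<dots> = (\<Sum>a=0..j-i. p a * q (j - i - a))"
      using sum.shift_bounds_cl_nat_ivl[of "\<lambda>k. p (k - i) * q (j - k)" 0 i "j - i"] True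
      by (simp add: add.commute)
    also have "\<dots> = (if j - i = 0 then 1 else 0)" using conv[of "j - i"] by (simp add: atMost_atLeast0)
    finally show ?thesis using e i j True by simp
  qed
qed simp_all

lemma toeplitz_det1:
  fixes p :: "nat \<Rightarrow> 'b::comm_ring_1"
  assumes "p 0 = 1"
  shows "det (mat N N (\<lambda>(i,j). tz p (int j - int i))) = 1"
proof -
  have "det (mat N N (\<lambda>(i,j). tz p (int j - int i))) = prod_list (diag_mat (mat N N (\<lambda>(i,j). tz p (int j - int i))))"
    by (rule det_upper_triangular[of _ N]) (auto simp: upper_triangular_def tz_def)
  also have "\<dots> = 1" by (simp add: prod_list_diag_prod tz_def assms)
  finally show ?thesis .
qed

lemma toeplitz_jacobi:
  fixes p q :: "nat \<Rightarrow> 'b::idom"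
  assumes p0: "p 0 = 1"
    and conv: "\<And>m. (\<Sum>a\<le>m. p a * q (m - a)) = (if m = 0 then 1 else 0)"
    and s: "s permutes {0..<r+c}"
    and sn: "\<And>j. j < r \<Longrightarrow> s j = n j"
    and sn': "\<And>k. k < c \<Longrightarrow> s (r+k) = r + c - 1 - n' k"
    and bd: "\<And>k. k < c \<Longrightarrow> n' k < r + c"
  shows "det (mat r r (\<lambda>(i,j). tz p (int (n j) - int i))) =
    signof s * det (mat c c (\<lambda>(k,l). tz q (int (n' k) - int (c - 1 - l))))"
proof -
  let ?N = "r + c"
  define H where "H = mat ?N ?N (\<lambda>(i,j). tz p (int j - int i))"
  define E where "E = mat ?N ?N (\<lambda>(i,j). tz q (int j - int i))"
  have HE: "H * E = 1\<^sub>m ?N" unfolding H_def E_def by (rule toeplitz_prod[OF conv])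
  have dH: "det H = 1" unfolding H_def by (rule toeplitz_det1[where p=p, OF p0])
  have sN: "\<And>i. i < ?N \<Longrightarrow> s i < ?N" using s by (simp add: permutes_in_image)
  have "det (mat r r (\<lambda>(i,j). H $$ (i, s j))) =
     signof s * det H * det (mat (?N-r) (?N-r) (\<lambda>(k,l). E $$ (s (r+k), r+l)))"
    by (rule jacobi_minor[OF _ _ HE s]) (auto simp: H_def E_def)
  moreover have "mat r r (\<lambda>(i,j). H $$ (i, s j)) = mat r r (\<lambda>(i,j). tz p (int (n j) - int i))"
    by (rule eq_matI) (auto simp: H_def sn[symmetric] sN)
  moreover have "mat (?N-r) (?N-r) (\<lambda>(k,l). E $$ (s (r+k), r+l)) = mat c c (\<lambda>(k,l). tz q (int (n' k) - int (c - 1 - l)))"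
  proof (rule eq_matI)
    fix k l assume "k < dim_row (mat c c (\<lambda>(k,l). tz q (int (n' k) - int (c - 1 - l))))"
       "l < dim_col (mat c c (\<lambda>(k,l). tz q (int (n' k) - int (c - 1 - l))))"
    hence k: "k < c" and l: "l < c" by simp_all
    have "int (r + l) - int (s (r + k)) = int (n' k) - int (c - 1 - l)"
      using sn'[OF k] bd[OF k] l by simp
    moreover have "E $$ (s (r+k), r+l) = tz q (int (r + l) - int (s (r + k)))"
      using k l sN[of "r+k"] by (simp add: E_def)
    ultimately show "mat (?N-r) (?N-r) (\<lambda>(k,l). E $$ (s (r+k), r+l)) $$ (k,l) = mat c c (\<lambda>(k,l). tz q (int (n' k) - int (c - 1 - l))) $$ (k,l)"
      using k l by (simp only: index_mat split)
  qed simp_all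
  ultimately show ?thesis using dH by simp
qed

lemma det_monic_basis:
  fixes x :: "nat \<Rightarrow> 'b::idom" and P :: "nat \<Rightarrow> 'b poly"
  assumes deg: "\<And>i. i < r \<Longrightarrow> degree (P i) \<le> i" and lc: "\<And>i. i < r \<Longrightarrow> coeff (P i) i = 1"
  shows "det (mat r r (\<lambda>(i,j). poly (P i) (x j))) = det (mat r r (\<lambda>(k,j). x j ^ k))"
proof -
  define T where "T = mat r r (\<lambda>(i,k). coeff (P i) k)"
  define V where "V = mat r r (\<lambda>(k,j). x j ^ k)"
  have "mat r r (\<lambda>(i,j). poly (P i) (x j)) = T * V"
  proof (rule eq_matI)
    fix i j assume "i < dim_row (T * V)" "j < dim_col (T * V)"
    hence i: "i < r" and j: "j < r" by (simp_all add: T_def V_def)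
    have "(T * V) $$ (i,j) = (\<Sum>k=0..<r. coeff (P i) k * x j ^ k)"
      using i j by (simp add: T_def V_def scalar_prod_def)
    also have "\<dots> = (\<Sum>k\<le>degree (P i). coeff (P i) k * x j ^ k)"
    proof (rule sum.mono_neutral_right)
      show "{..degree (P i)} \<subseteq> {0..<r}" using deg[OF i] i by auto
      show "\<forall>k\<in>{0..<r} - {..degree (P i)}. coeff (P i) k * x j ^ k = 0"
        by (auto simp: coeff_eq_0)
    qed simp
    also have "\<dots> = poly (P i) (x j)" by (simp add: poly_altdef)
    finally show "mat r r (\<lambda>(i,j). poly (P i) (x j)) $$ (i,j) = (T * V) $$ (i,j)" using i j by simp
  qed (simp_all add: T_def V_def)
  moreover have "det T = 1"
  proof -
    have "det T = prod_list (diag_mat T)"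
    proof (rule det_lower_triangular[where n=r])
      fix i j assume "i < j" "j < r"
      thus "T $$ (i,j) = 0" using deg[of i] by (simp add: T_def coeff_eq_0)
    qed (simp add: T_def)
    also have "\<dots> = 1" by (simp add: prod_list_diag_prod T_def lc)
    finally show ?thesis .
  qed
  moreover have "T \<in> carrier_mat r r" "V \<in> carrier_mat r r" by (simp_all add: T_def V_def)
  ultimately have "det (mat r r (\<lambda>(i,j). poly (P i) (x j))) = det V"
    using det_mult[of T r V] by simp
  thus ?thesis by (simp add: V_def)
qed

definition npoly :: "(nat \<Rightarrow> 'b::comm_ring_1) \<Rightarrow> nat \<Rightarrow> 'b poly" where
  "npoly x i = (\<Prod>k<i. [:- x k, 1:])"

lemma npoly_degree: "degree (npoly (x :: nat \<Rightarrow> 'b::idom) i) = i"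
  unfolding npoly_def by (subst degree_prod_eq_sum_degree) auto

lemma npoly_lc: "coeff (npoly (x :: nat \<Rightarrow> 'b::idom) i) i = 1"
proof -
  have "coeff (npoly x i) i = lead_coeff (npoly x i)" by (simp add: npoly_degree)
  also have "\<dots> = 1" unfolding npoly_def lead_coeff_prod by simp
  finally show ?thesis .
qed

lemma poly_npoly: "poly (npoly x i) y = (\<Prod>k<i. y - x k)"
  by (simp add: npoly_def poly_prod)

lemma vandermonde_det:
  fixes x :: "nat \<Rightarrow> 'b::idom"
  shows "det (mat r r (\<lambda>(k,j). x j ^ k)) = (\<Prod>j<r. \<Prod>i<j. x j - x i)"
proof -
  have "det (mat r r (\<lambda>(k,j). x j ^ k)) = det (mat r r (\<lambda>(i,j). poly (npoly x i) (x j)))"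
    by (rule det_monic_basis[symmetric]) (simp_all add: npoly_degree npoly_lc)
  also have "\<dots> = prod_list (diag_mat (mat r r (\<lambda>(i,j). poly (npoly x i) (x j))))"
  proof (rule det_upper_triangular[of _ r])
    show "upper_triangular (mat r r (\<lambda>(i,j). poly (npoly x i) (x j)))"
      unfolding upper_triangular_def
    proof (intro allI impI)
      fix i j assume "i < dim_row (mat r r (\<lambda>(i,j). poly (npoly x i) (x j)))" "j < i"
      hence "i < r" "j < i" by simp_all
      moreover have "(\<Prod>k<i. x j - x k) = 0"
        by (rule prod_zero) (use \<open>j < i\<close> in auto)
      ultimately show "mat r r (\<lambda>(i,j). poly (npoly x i) (x j)) $$ (i,j) = 0"
        by (simp add: poly_npoly)
    qed
  qed simp
  also have "\<dots> = (\<Prod>j<r. \<Prod>i<j. x j - x i)"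
    by (simp add: prod_list_diag_prod poly_npoly atLeast0LessThan)
  finally show ?thesis .
qed

lemma det_npoly:
  fixes x :: "nat \<Rightarrow> 'b::idom"
  shows "det (mat r r (\<lambda>(i,j). poly (npoly y i) (x j))) = (\<Prod>j<r. \<Prod>i<j. x j - x i)"
  by (subst det_monic_basis) (simp_all add: npoly_degree npoly_lc vandermonde_det)

lemma poly_npoly_nat:
  "poly (npoly of_nat i) (of_nat n :: 'b::field_char_0) = (if i \<le> n then fact n / fact (n - i) else 0)"
proof (induction i)
  case (Suc i)
  have "poly (npoly of_nat (Suc i)) (of_nat n :: 'b) = poly (npoly of_nat i) (of_nat n) * (of_nat n - of_nat i)"
    by (simp add: poly_npoly)
  also have "\<dots> = (if Suc i \<le> n then fact n / fact (n - Suc i) else 0)"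
  proof (cases "Suc i \<le> n")
    case True
    have f: "fact (n - i) = (of_nat (n - i) :: 'b) * fact (n - Suc i)"
      using True by (metis Suc_diff_Suc Suc_le_lessD fact_Suc)
    have d: "(of_nat (n - i) :: 'b) = of_nat n - of_nat i" using True by (simp add: of_nat_diff)
    have ne: "(of_nat (n - i) :: 'b) \<noteq> 0" using True by simp
    have "poly (npoly of_nat i) (of_nat n) * (of_nat n - of_nat i) = fact n / fact (n - i) * (of_nat (n - i) :: 'b)"
      using True Suc.IH d by simp
    also have "\<dots> = fact n / fact (n - Suc i)" unfolding f using ne by (simp add: field_simps)
    finally show ?thesis using True by simp
  next
    case False
    thus ?thesis using Suc.IH by (cases "i = n") auto
  qed
  finally show ?case .
qed (simp add: poly_npoly)

lemma part_dec:
  assumes "is_partition lam" "i \<le> j" "j < length lam"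
  shows "lam ! j \<le> lam ! i"
proof (cases "i = j")
  case False
  hence "i < j" using assms by simp
  thus ?thesis using assms sorted_wrt_nth_less[of "(\<ge>)" lam i j] by (simp add: is_partition_def)
qed simp

lemma fold_max_ge: "a \<le> fold max xs a \<and> (\<forall>x\<in>set xs. x \<le> fold max xs (a::nat))"
proof (induction xs arbitrary: a)
  case (Cons y ys)
  from Cons.IH[of "max y a"] show ?case by auto
qed simp

lemma conj_len: "length (conj_partition lam) = fold max lam 0"
  by (simp add: conj_partition_def)

lemma conj_nth:
  assumes "k < length (conj_partition lam)"
  shows "conj_partition lam ! k = card {i. i < length lam \<and> k < lam ! i}"
proof -
  have k: "k < fold max lam 0" using assms by (simp add: conj_len)
  have "conj_partition lam ! k = length (filter (\<lambda>x. Suc k \<le> x) lam)"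
    using k by (simp add: conj_partition_def del: upt_Suc)
  also have "\<dots> = card {i. i < length lam \<and> Suc k \<le> lam ! i}" by (rule length_filter_conv_card)
  finally show ?thesis by (simp add: Suc_le_eq)
qed

lemma down_closed:
  assumes fin: "finite S" and dc: "\<And>i j. j \<le> i \<Longrightarrow> i \<in> S \<Longrightarrow> j \<in> (S::nat set)"
  shows "S = {..<card S}"
proof (cases "S = {}")
  case False
  define M where "M = Max S"
  have "S = {..M}"
  proof
    show "S \<subseteq> {..M}" using fin M_def by auto
    show "{..M} \<subseteq> S" using dc Max_in[OF fin False] M_def by auto
  qed
  thus ?thesis by (simp add: lessThan_Suc_atMost)
qed simp

lemma conj_iff:
  assumes part: "is_partition lam" and a: "a < length lam"
  shows "a < card {i. i < length lam \<and> k < lam ! i} \<longleftrightarrow> k < lam ! a"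
proof -
  let ?S = "{i. i < length lam \<and> k < lam ! i}"
  have "?S = {..<card ?S}"
  proof (rule down_closed)
    fix i j assume "j \<le> i" "i \<in> ?S"
    thus "j \<in> ?S" using part_dec[OF part, of j i] by auto
  qed simp
  hence "a \<in> ?S \<longleftrightarrow> a < card ?S" by blast
  thus ?thesis using a by simp
qed

lemma cnt_le: "card {i. i < (r::nat) \<and> P i} \<le> r"
proof -
  have "card {i. i < r \<and> P i} \<le> card {..<r}" by (rule card_mono) auto
  thus ?thesis by simp
qed

lemma cnt_anti:
  fixes lam :: "nat list"
  assumes "k \<le> k'"
  shows "card {i. i < length lam \<and> k' < lam ! i} \<le> card {i. i < length lam \<and> k < lam ! i}"
  by (rule card_mono) (use assms in \<open>auto intro: le_less_trans\<close>)

lemma lam_le_c: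
  assumes "i < length lam"
  shows "lam ! i \<le> length (conj_partition lam)"
  using fold_max_ge[of 0 lam] nth_mem[OF assms] by (simp add: conj_len)

lemma n_bound:
  assumes "j < length lam"
  shows "part_seq lam j < length lam + length (conj_partition lam)"
proof -
  have "length lam - 1 - j < length lam" using assms by simp
  hence "lam ! (length lam - 1 - j) \<le> length (conj_partition lam)" by (rule lam_le_c)
  thus ?thesis using assms by (simp add: part_seq_def)
qed

lemma n_mono:
  assumes part: "is_partition lam" and "j < j'" "j' < length lam"
  shows "part_seq lam j < part_seq lam j'"
proof -
  have "lam ! (length lam - 1 - j) \<le> lam ! (length lam - 1 - j')"
    by (rule part_dec[OF part]) (use assms in auto)
  thus ?thesis using assms by (simp add: part_seq_def)
qed

lemma n'_bound:
  assumes "k < length (conj_partition lam)"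
  shows "part_seq (conj_partition lam) k < length lam + length (conj_partition lam)"
  using assms conj_nth[of "length (conj_partition lam) - 1 - k" lam]
    cnt_le[of "length lam" "\<lambda>i. length (conj_partition lam) - 1 - k < lam ! i"]
  by (simp add: part_seq_def)

lemma n'_mono:
  assumes "k < k'" "k' < length (conj_partition lam)"
  shows "part_seq (conj_partition lam) k < part_seq (conj_partition lam) k'"
proof -
  let ?c = "length (conj_partition lam)"
  have "conj_partition lam ! (?c - 1 - k) \<le> conj_partition lam ! (?c - 1 - k')"
    using assms conj_nth[of "?c - 1 - k" lam] conj_nth[of "?c - 1 - k'" lam]
      cnt_anti[of "?c - 1 - k'" "?c - 1 - k" lam] by simp
  thus ?thesis using assms by (simp add: part_seq_def)
qed

lemma cross:
  assumes part: "is_partition lam" and j: "j < length lam" and k: "k < length (conj_partition lam)"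
  shows "part_seq lam j + part_seq (conj_partition lam) k \<noteq> length lam + length (conj_partition lam) - 1"
proof -
  let ?r = "length lam" and ?c = "length (conj_partition lam)"
  define a where "a = ?r - 1 - j"
  define b where "b = ?c - 1 - k"
  have a: "a < ?r" and b: "b < ?c" using j k by (auto simp: a_def b_def)
  have ha: "a + j + 1 = ?r" and hb: "b + k + 1 = ?c" using j k by (auto simp: a_def b_def)
  have cb: "conj_partition lam ! b = card {i. i < ?r \<and> b < lam ! i}" by (rule conj_nth[OF b])
  have eq: "part_seq lam j + part_seq (conj_partition lam) k = lam ! a + j + conj_partition lam ! b + k"
    by (simp add: part_seq_def a_def b_def)
  show ?thesis
  proof (cases "b < lam ! a")
    case True
    hence "a < conj_partition lam ! b" using conj_iff[OF part a, of b] cb by simp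
    thus ?thesis using True eq ha hb by linarith
  next
    case False
    hence "\<not> a < conj_partition lam ! b" using conj_iff[OF part a, of b] cb by simp
    thus ?thesis using False eq ha hb by linarith
  qed
qed

definition sig :: "nat list \<Rightarrow> nat \<Rightarrow> nat" where
  "sig lam j = (if j < length lam then part_seq lam j
     else if j < length lam + length (conj_partition lam)
       then length lam + length (conj_partition lam) - 1 - part_seq (conj_partition lam) (j - length lam)
     else j)"

definition rev_perm :: "nat \<Rightarrow> nat \<Rightarrow> nat" where
  "rev_perm c l = (if l < c then c - 1 - l else l)"

lemma perm_from_inj:
  fixes N :: nat
  assumes "inj_on f {0..<N}" "\<And>x. x < N \<Longrightarrow> f x < N" "\<And>x. x \<ge> N \<Longrightarrow> f x = x"
  shows "f permutes {0..<N}"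
proof (rule bij_imp_permutes)
  have "f ` {0..<N} = {0..<N}" by (rule endo_inj_surj) (use assms in auto)
  thus "bij_betw f {0..<N} {0..<N}" using assms(1) by (simp add: bij_betw_def)
qed (use assms in auto)

lemma rev_perm_permutes: "rev_perm c permutes {0..<c}"
  by (rule perm_from_inj) (auto simp: rev_perm_def inj_on_def)

lemma sig_permutes:
  assumes part: "is_partition lam"
  shows "sig lam permutes {0..<length lam + length (conj_partition lam)}"
proof (rule perm_from_inj)
  let ?r = "length lam" and ?c = "length (conj_partition lam)"
  show "inj_on (sig lam) {0..<?r + ?c}"
  proof (rule inj_onI)
    fix x y assume x: "x \<in> {0..<?r + ?c}" and y: "y \<in> {0..<?r + ?c}" and e: "sig lam x = sig lam y"
    have m1: "\<And>x y. x < y \<Longrightarrow> y < ?r \<Longrightarrow> sig lam x \<noteq> sig lam y"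
      using n_mono[OF part] by (auto simp: sig_def dest: less_imp_neq)
    have m2: "\<And>x y. ?r \<le> x \<Longrightarrow> x < y \<Longrightarrow> y < ?r + ?c \<Longrightarrow> sig lam x \<noteq> sig lam y"
    proof -
      fix x y assume "?r \<le> x" "x < y" "y < ?r + ?c"
      moreover have "part_seq (conj_partition lam) (x - ?r) < part_seq (conj_partition lam) (y - ?r)"
        by (rule n'_mono) (use calculation in auto)
      moreover have "part_seq (conj_partition lam) (y - ?r) < ?r + ?c" by (rule n'_bound) (use calculation in auto)
      ultimately show "sig lam x \<noteq> sig lam y" by (simp add: sig_def)
    qed
    have m3: "\<And>x y. x < ?r \<Longrightarrow> ?r \<le> y \<Longrightarrow> y < ?r + ?c \<Longrightarrow> sig lam x \<noteq> sig lam y"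
    proof -
      fix x y assume "x < ?r" "?r \<le> y" "y < ?r + ?c"
      moreover have "part_seq lam x + part_seq (conj_partition lam) (y - ?r) \<noteq> ?r + ?c - 1"
        by (rule cross[OF part]) (use calculation in auto)
      moreover have "part_seq (conj_partition lam) (y - ?r) < ?r + ?c" by (rule n'_bound) (use calculation in auto)
      ultimately show "sig lam x \<noteq> sig lam y" by (simp add: sig_def)
    qed
    show "x = y"
    proof (rule ccontr)
      assume "x \<noteq> y"
      hence "x < y \<or> y < x" by auto
      thus False using m1 m2 m3 x y e
        by (metis atLeastLessThan_iff linorder_not_le)
    qed
  qed
  show "\<And>x. x < ?r + ?c \<Longrightarrow> sig lam x < ?r + ?c"
    using n_bound[of _ lam] by (auto simp: sig_def)
  show "\<And>x. ?r + ?c \<le> x \<Longrightarrow> sig lam x = x" by (simp add: sig_def)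
qed

definition sgnJ :: "nat list \<Rightarrow> int" where
  "sgnJ lam = (\<Prod>i<length lam. (-1)^i) * (\<Prod>j<length lam. (-1)^(part_seq lam j))
     * sign (sig lam) * sign (rev_perm (length (conj_partition lam)))"

lemma minus_one_pow_diff:
  assumes "i \<le> n"
  shows "(-1::'b::comm_ring_1)^(n-i) = (-1)^i * (-1)^n"
proof -
  have "(-1::'b)^n = (-1)^(n-i) * (-1)^i" using assms by (simp add: power_add[symmetric])
  hence "(-1::'b)^i * (-1)^n = (-1)^(n-i) * ((-1)^i * (-1)^i)" by (simp add: ac_simps)
  thus ?thesis by (simp add: minus_one_mult_self)
qed

lemma JT_partition:
  fixes h e :: "nat \<Rightarrow> 'b::idom"
  assumes h0: "h 0 = 1"
    and dual: "\<And>m. (\<Sum>a\<le>m. (-1)^a * h a * e (m - a)) = (if m = 0 then 1 else 0)"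
    and part: "is_partition lam"
  shows "det (mat (length lam) (length lam) (\<lambda>(i,j). tz h (int (part_seq lam j) - int i))) =
    of_int (sgnJ lam) * det (mat (length (conj_partition lam)) (length (conj_partition lam))
       (\<lambda>(i,j). tz e (int (part_seq (conj_partition lam) j) - int i)))"
proof -
  let ?r = "length lam" and ?c = "length (conj_partition lam)"
  let ?n = "part_seq lam" and ?n' = "part_seq (conj_partition lam)"
  define p where "p = (\<lambda>a. (-1)^a * h a)"
  have p0: "p 0 = 1" using h0 by (simp add: p_def)
  have conv: "\<And>m. (\<Sum>a\<le>m. p a * e (m - a)) = (if m = 0 then 1 else 0)"
    using dual by (simp add: p_def)
  have J: "det (mat ?r ?r (\<lambda>(i,j). tz p (int (?n j) - int i))) =
    signof (sig lam) * det (mat ?c ?c (\<lambda>(k,l). tz e (int (?n' k) - int (?c - 1 - l))))"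
  proof (rule toeplitz_jacobi[OF p0 conv sig_permutes[OF part]])
    show "\<And>j. j < ?r \<Longrightarrow> sig lam j = ?n j" by (simp add: sig_def)
    show "\<And>k. k < ?c \<Longrightarrow> sig lam (?r + k) = ?r + ?c - 1 - ?n' k" by (simp add: sig_def)
    show "\<And>k. k < ?c \<Longrightarrow> ?n' k < ?r + ?c" by (rule n'_bound)
  qed
  define Mh where "Mh = mat ?r ?r (\<lambda>(i,j). tz h (int (?n j) - int i))"
  have Mhc: "Mh \<in> carrier_mat ?r ?r" by (simp add: Mh_def)
  have "mat ?r ?r (\<lambda>(i,j). tz p (int (?n j) - int i)) =
     mat ?r ?r (\<lambda>(i,j). (-1)^i * (-1)^(?n j) * Mh $$ (i,j))"
  proof (rule eq_matI)
    fix i j assume "i < dim_row (mat ?r ?r (\<lambda>(i,j). (-1)^i * (-1)^(?n j) * Mh $$ (i,j)))"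
      "j < dim_col (mat ?r ?r (\<lambda>(i,j). (-1)^i * (-1)^(?n j) * Mh $$ (i,j)))"
    hence i: "i < ?r" and j: "j < ?r" by simp_all
    show "mat ?r ?r (\<lambda>(i,j). tz p (int (?n j) - int i)) $$ (i,j) =
      mat ?r ?r (\<lambda>(i,j). (-1)^i * (-1)^(?n j) * Mh $$ (i,j)) $$ (i,j)"
    proof (cases "i \<le> ?n j")
      case True
      hence "nat (int (?n j) - int i) = ?n j - i" by simp
      thus ?thesis using i j True by (simp add: Mh_def tz_def p_def minus_one_pow_diff)
    qed (use i j in \<open>simp add: Mh_def tz_def\<close>)
  qed simp_all
  hence L: "det (mat ?r ?r (\<lambda>(i,j). tz p (int (?n j) - int i))) =
     (\<Prod>i<?r. (-1)^i) * (\<Prod>j<?r. (-1)^(?n j)) * det Mh"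
    by (simp only: det_scale[OF Mhc])
  define Me where "Me = mat ?c ?c (\<lambda>(i,j). tz e (int (?n' j) - int i))"
  have "mat ?c ?c (\<lambda>(k,l). tz e (int (?n' k) - int (?c - 1 - l))) =
     mat ?c ?c (\<lambda>(k,l). transpose_mat Me $$ (k, rev_perm ?c l))"
    by (rule eq_matI) (auto simp: Me_def rev_perm_def)
  hence R: "det (mat ?c ?c (\<lambda>(k,l). tz e (int (?n' k) - int (?c - 1 - l)))) = signof (rev_perm ?c) * det Me"
    using det_permute_cols[of "transpose_mat Me" ?c "rev_perm ?c", OF _ rev_perm_permutes]
    by (simp add: Me_def det_transpose[of _ ?c])
  define U where "U = (\<Prod>i<?r. (-1::'b)^i) * (\<Prod>j<?r. (-1)^(?n j))"
  have UU: "U * U = 1"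
  proof -
    have a: "(\<Prod>i<?r. (-1::'b)^i) * (\<Prod>i<?r. (-1)^i) = 1"
      by (subst prod.distrib[symmetric]) (simp add: minus_one_mult_self)
    have b: "(\<Prod>j<?r. (-1::'b)^(?n j)) * (\<Prod>j<?r. (-1)^(?n j)) = 1"
      by (subst prod.distrib[symmetric]) (simp add: minus_one_mult_self)
    have "U * U = ((\<Prod>i<?r. (-1::'b)^i) * (\<Prod>i<?r. (-1)^i)) * ((\<Prod>j<?r. (-1::'b)^(?n j)) * (\<Prod>j<?r. (-1)^(?n j)))"
      by (simp only: U_def ac_simps)
    thus ?thesis using a b by simp
  qed
  have "U * det Mh = signof (sig lam) * (signof (rev_perm ?c) * det Me)"
    using J L R by (simp add: U_def)
  hence "U * (U * det Mh) = U * (signof (sig lam) * (signof (rev_perm ?c) * det Me))" by simp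
  hence "det Mh = U * signof (sig lam) * signof (rev_perm ?c) * det Me"
    by (simp add: mult.assoc[symmetric] UU)
  moreover have "of_int (sgnJ lam) = U * signof (sig lam) * signof (rev_perm ?c)"
    by (simp add: sgnJ_def U_def)
  ultimately show ?thesis by (simp add: Mh_def Me_def)
qed

definition bseq :: "(nat \<Rightarrow> 'a::field_char_0 poly) \<Rightarrow> nat \<Rightarrow> 'a poly" where
  "bseq X k = smult (inverse (fact k)) (X k)"

definition dualp :: "(nat \<Rightarrow> 'b::comm_ring_1) \<Rightarrow> (nat \<Rightarrow> 'b) \<Rightarrow> bool" where
  "dualp h e \<longleftrightarrow> (\<forall>m. (\<Sum>a\<le>m. (-1)^a * h a * e (m - a)) = (if m = 0 then 1 else 0))"

lemma dualp_sym:
  assumes "dualp h e" shows "dualp e h"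
  unfolding dualp_def
proof
  fix m
  have "(\<Sum>a\<le>m. (-1)^a * e a * h (m - a)) = (\<Sum>a\<le>m. (-1)^(m - a) * e (m - a) * h (m - (m - a)))"
    by (rule sum.reindex_bij_witness[of _ "\<lambda>a. m - a" "\<lambda>a. m - a"]) auto
  also have "\<dots> = (\<Sum>a\<le>m. (-1)^m * ((-1)^a * h a * e (m - a)))"
    by (rule sum.cong) (auto simp: minus_one_pow_diff)
  also have "\<dots> = (-1)^m * (if m = 0 then 1 else 0)"
    using assms by (simp add: dualp_def sum_distrib_left[symmetric])
  finally show "(\<Sum>a\<le>m. (-1)^a * e a * h (m - a)) = (if m = 0 then 1 else 0)" by simp
qed

lemma pderiv_iter:
  assumes "appell X"
  shows "(pderiv ^^ i) (X m) = (if i \<le> m then smult (fact m / fact (m - i)) (X (m - i)) else 0)"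
proof (induction i)
  case (Suc i)
  have "(pderiv ^^ Suc i) (X m) = pderiv ((pderiv ^^ i) (X m))" by simp
  also have "\<dots> = (if Suc i \<le> m then smult (fact m / fact (m - Suc i)) (X (m - Suc i)) else 0)"
  proof (cases "Suc i \<le> m")
    case True
    have "m - i \<ge> 1" using True by simp
    hence "pderiv (X (m - i)) = smult (of_nat (m - i)) (X (m - i - 1))"
      using assms unfolding appell_def by blast
    hence d: "pderiv (X (m - i)) = smult (of_nat (m - i)) (X (m - Suc i))" by simp
    have f: "fact (m - i) = (of_nat (m - i) :: 'a) * fact (m - Suc i)"
      using True by (metis Suc_diff_Suc Suc_le_lessD fact_Suc)
    have ne: "(of_nat (m - i) :: 'a) \<noteq> 0" using True by simp
    have "fact m / fact (m - i) * (of_nat (m - i) :: 'a) = fact m / fact (m - Suc i)"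
      unfolding f using ne by (simp add: field_simps)
    thus ?thesis using True Suc.IH d by (simp add: pderiv_smult)
  next
    case False
    thus ?thesis using Suc.IH assms by (cases "i = m") (auto simp: appell_def pderiv_smult)
  qed
  finally show ?case .
qed simp

lemma const_poly_prod: "(\<Prod>j<(r::nat). [:f j:]) = [:\<Prod>j<r. f j:]"
  by (induction r) (simp_all add: ac_simps)

lemma const_mult_poly: "[:a:] * p = smult a p"
  by simp

lemma wronskian_formula:
  assumes X: "appell X"
  shows "wronskian r (\<lambda>j. X (n j)) =
    smult (\<Prod>j<r. fact (n j)) (det (mat r r (\<lambda>(i,j). tz (bseq X) (int (n j) - int i))))"
proof -
  define M where "M = mat r r (\<lambda>(i,j). tz (bseq X) (int (n j) - int i))"
  have Mc: "M \<in> carrier_mat r r" by (simp add: M_def)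
  have "mat r r (\<lambda>(i,j). (pderiv ^^ i) (X (n j))) = mat r r (\<lambda>(i,j). (\<lambda>_. 1) i * [:fact (n j):] * M $$ (i,j))"
  proof (rule eq_matI)
    fix i j assume "i < dim_row (mat r r (\<lambda>(i,j). (\<lambda>_. 1) i * [:fact (n j):] * M $$ (i,j)))"
      "j < dim_col (mat r r (\<lambda>(i,j). (\<lambda>_. 1) i * [:fact (n j):] * M $$ (i,j)))"
    hence i: "i < r" and j: "j < r" by simp_all
    show "mat r r (\<lambda>(i,j). (pderiv ^^ i) (X (n j))) $$ (i,j) = mat r r (\<lambda>(i,j). (\<lambda>_. 1) i * [:fact (n j):] * M $$ (i,j)) $$ (i,j)"
    proof (cases "i \<le> n j")
      case True
      hence "nat (int (n j) - int i) = n j - i" by simp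
      thus ?thesis using i j True
        by (simp add: M_def tz_def pderiv_iter[OF X] bseq_def divide_inverse)
    qed (use i j in \<open>simp add: M_def tz_def pderiv_iter[OF X]\<close>)
  qed simp_all
  hence "wronskian r (\<lambda>j. X (n j)) = (\<Prod>i<r. 1) * (\<Prod>j<r. [:fact (n j):]) * det M"
    unfolding wronskian_def by (simp only: det_scale[OF Mc])
  thus ?thesis by (simp add: const_poly_prod M_def)
qed

lemma vandermonde_nonzero:
  assumes "\<And>i j. i < j \<Longrightarrow> j < r \<Longrightarrow> n i < n j"
  shows "vandermonde r n \<noteq> 0"
proof -
  have "vandermonde r n > 0" unfolding vandermonde_def
    by (intro prod_pos) (use assms in auto)
  thus ?thesis by simp
qed

lemma wa_formula:
  assumes X: "appell X"
  shows "wronskian_appell X lam = smult (inverse (of_int (vandermonde (length lam) (part_seq lam))) * (\<Prod>j<length lam. fact (part_seq lam j)))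
     (det (mat (length lam) (length lam) (\<lambda>(i,j). tz (bseq X) (int (part_seq lam j) - int i))))"
  unfolding wronskian_appell_def wronskian_formula[OF X] by simp

definition cst :: "nat list \<Rightarrow> 'a::field_char_0" where
  "cst lam = of_int (sgnJ lam) * (\<Prod>j<length lam. fact (part_seq lam j))
     / of_int (vandermonde (length lam) (part_seq lam))
     * of_int (vandermonde (length (conj_partition lam)) (part_seq (conj_partition lam)))
     / (\<Prod>j<length (conj_partition lam). fact (part_seq (conj_partition lam) j))"

lemma wa_dual:
  assumes X: "appell X" and Y: "appell Y" and d: "dualp (bseq Y) (bseq X)" and part: "is_partition lam"
  shows "wronskian_appell Y lam = smult (cst lam) (wronskian_appell X (conj_partition lam))"
proof -
  let ?r = "length lam" and ?c = "length (conj_partition lam)"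
  let ?n = "part_seq lam" and ?n' = "part_seq (conj_partition lam)"
  define DY where "DY = det (mat ?r ?r (\<lambda>(i,j). tz (bseq Y) (int (?n j) - int i)))"
  define DX where "DX = det (mat ?c ?c (\<lambda>(i,j). tz (bseq X) (int (?n' j) - int i)))"
  define V where "V = (of_int (vandermonde ?r ?n) :: 'a)"
  define V' where "V' = (of_int (vandermonde ?c ?n') :: 'a)"
  define F where "F = (\<Prod>j<?r. fact (?n j) :: 'a)"
  define F' where "F' = (\<Prod>j<?c. fact (?n' j) :: 'a)"
  have V'0: "V' \<noteq> 0" unfolding V'_def using vandermonde_nonzero[of ?c ?n'] n'_mono[of _ _ lam] by simp
  have F'0: "F' \<noteq> 0" unfolding F'_def by (simp add: prod_zero_iff)
  have Y0: "bseq Y 0 = 1" using Y by (simp add: bseq_def appell_def)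
  have "DY = of_int (sgnJ lam) * DX"
    unfolding DY_def DX_def
    by (rule JT_partition[where h="bseq Y" and e="bseq X", OF Y0 _ part]) (use d in \<open>simp add: dualp_def\<close>)
  hence DY: "DY = smult (of_int (sgnJ lam)) DX" by (simp add: of_int_poly)
  have WY: "wronskian_appell Y lam = smult (inverse V * F) DY"
    unfolding wa_formula[OF Y] DY_def V_def F_def ..
  have WX: "wronskian_appell X (conj_partition lam) = smult (inverse V' * F') DX"
    unfolding wa_formula[OF X] DX_def V'_def F'_def ..
  have DX: "DX = smult (V' / F') (wronskian_appell X (conj_partition lam))"
    unfolding WX using V'0 F'0 by (simp add: field_simps)
  have "wronskian_appell Y lam = smult (inverse V * F * of_int (sgnJ lam) * (V' / F')) (wronskian_appell X (conj_partition lam))"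
    unfolding WY DY DX by (simp add: mult.assoc)
  also have "inverse V * F * of_int (sgnJ lam) * (V' / F') = cst lam"
    unfolding cst_def V_def V'_def F_def F'_def by (simp add: field_simps)
  finally show ?thesis .
qed

definition mono_seq :: "nat \<Rightarrow> 'a::field_char_0 poly" where
  "mono_seq n = monom 1 n"

lemma appell_mono: "appell (mono_seq :: nat \<Rightarrow> 'a::field_char_0 poly)"
  unfolding appell_def mono_seq_def by (simp add: pderiv_monom smult_monom monom_0 one_pCons)

lemma bseq_mono: "bseq mono_seq k = (monom (inverse (fact k)) k :: 'a::field_char_0 poly)"
  by (simp add: bseq_def mono_seq_def smult_monom)

lemma neg_one_pow_poly: "(-1 :: 'a::comm_ring_1 poly) ^ a = [:(-1)^a:]"
  by (induction a) (simp_all add: ac_simps)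

lemma dual_mono: "dualp (bseq mono_seq) (bseq (mono_seq :: nat \<Rightarrow> 'a::field_char_0 poly))"
  unfolding dualp_def
proof
  fix m
  have "(\<Sum>a\<le>m. (-1)^a * bseq mono_seq a * bseq mono_seq (m - a)) =
    (\<Sum>a\<le>m. monom ((-1)^a * inverse (fact a) * inverse (fact (m - a))) m :: 'a poly)"
    by (rule sum.cong) (auto simp: bseq_mono neg_one_pow_poly mult_monom smult_monom mult.assoc)
  also have "\<dots> = monom (\<Sum>a\<le>m. (-1)^a * inverse (fact a) * inverse (fact (m - a))) m"
    by (simp add: monom_sum)
  also have "(\<Sum>a\<le>m. (-1)^a * inverse (fact a) * inverse (fact (m - a))) =
     inverse (fact m) * (\<Sum>a\<le>m. (-1)^a * of_nat (m choose a) :: 'a)"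
    unfolding sum_distrib_left
    by (rule sum.cong) (auto simp: binomial_fact field_simps)
  also have "\<dots> = (if m = 0 then 1 else 0)"
    using choose_alternating_sum[of m] by (cases "m = 0") auto
  finally show "(\<Sum>a\<le>m. (-1)^a * bseq mono_seq a * bseq mono_seq (m - a)) = (if m = 0 then 1 else (0 :: 'a poly))"
    by (simp add: monom_0)
qed

lemma prod_monom: "finite S \<Longrightarrow> (\<Prod>i\<in>S. monom (a i) (k i)) = monom (\<Prod>i\<in>S. a i) (\<Sum>i\<in>S. k i)"
  by (induction S rule: finite_induct) (simp_all add: mult_monom monom_0 one_pCons)

lemma monom_det:
  fixes C :: "nat \<Rightarrow> nat \<Rightarrow> 'a::comm_ring_1"
  assumes nz: "\<And>i j. i < r \<Longrightarrow> j < r \<Longrightarrow> C i j \<noteq> 0 \<Longrightarrow> i \<le> n j"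
  shows "det (mat r r (\<lambda>(i,j). monom (C i j) (n j - i))) =
    monom (det (mat r r (\<lambda>(i,j). C i j))) ((\<Sum>j<r. n j) - (\<Sum>i<r. i))"
proof -
  let ?E = "(\<Sum>j<r. n j) - (\<Sum>i<r. i)"
  have "det (mat r r (\<lambda>(i,j). monom (C i j) (n j - i))) =
    (\<Sum>p\<in>{p. p permutes {0..<r}}. signof p * (\<Prod>i=0..<r. monom (C i (p i)) (n (p i) - i)))"
    by (subst det_def'[of _ r]) (auto intro!: sum.cong prod.cong)
  also have "\<dots> = (\<Sum>p\<in>{p. p permutes {0..<r}}. monom (signof p * (\<Prod>i=0..<r. C i (p i))) ?E)"
  proof (rule sum.cong, simp)
    fix p assume "p \<in> {p. p permutes {0..<r}}"
    hence p: "p permutes {0..<r}" by simp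
    have pr: "\<And>i. i < r \<Longrightarrow> p i < r" using p by (simp add: permutes_in_image)
    have "(\<Prod>i=0..<r. monom (C i (p i)) (n (p i) - i)) = monom (\<Prod>i=0..<r. C i (p i)) (\<Sum>i=0..<r. n (p i) - i)"
      by (simp add: prod_monom)
    also have "\<dots> = monom (\<Prod>i=0..<r. C i (p i)) ?E"
    proof (cases "\<forall>i<r. C i (p i) \<noteq> 0")
      case True
      hence le: "\<And>i. i \<in> {0..<r} \<Longrightarrow> i \<le> n (p i)" using nz pr by auto
      have "(\<Sum>i=0..<r. n (p i) - i) = (\<Sum>i=0..<r. n (p i)) - (\<Sum>i=0..<r. i)"
        by (rule sum_subtractf_nat) (use le in auto)
      also have "(\<Sum>i=0..<r. n (p i)) = (\<Sum>j=0..<r. n j)"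
        using sum.permute[OF p, of n] by (simp add: comp_def)
      finally show ?thesis by (simp add: atLeast0LessThan)
    next
      case False
      then obtain i where "i < r" "C i (p i) = 0" by auto
      hence "(\<Prod>i=0..<r. C i (p i)) = 0" by (intro prod_zero) auto
      thus ?thesis by simp
    qed
    finally show "signof p * (\<Prod>i=0..<r. monom (C i (p i)) (n (p i) - i)) =
       monom (signof p * (\<Prod>i=0..<r. C i (p i))) ?E"
      by (simp add: of_int_poly const_mult_poly smult_monom)
  qed
  also have "\<dots> = monom (\<Sum>p\<in>{p. p permutes {0..<r}}. signof p * (\<Prod>i=0..<r. C i (p i))) ?E"
    by (simp add: monom_sum)
  also have "(\<Sum>p\<in>{p. p permutes {0..<r}}. signof p * (\<Prod>i=0..<r. C i (p i))) = det (mat r r (\<lambda>(i,j). C i j))"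
    by (subst det_def'[of _ r]) (auto intro!: sum.cong prod.cong)
  finally show ?thesis .
qed

lemma wa_mono:
  assumes mono: "\<And>i j. i < j \<Longrightarrow> j < length lam \<Longrightarrow> part_seq lam i < part_seq lam j"
  shows "wronskian_appell (mono_seq :: nat \<Rightarrow> 'a::field_char_0 poly) lam =
    monom 1 ((\<Sum>j<length lam. part_seq lam j) - (\<Sum>i<length lam. i))"
proof -
  let ?r = "length lam" and ?n = "part_seq lam"
  let ?E = "(\<Sum>j<?r. ?n j) - (\<Sum>i<?r. i)"
  define C where "C = (\<lambda>i j. if i \<le> ?n j then inverse (fact (?n j - i)) else (0::'a))"
  define V where "V = (of_int (vandermonde ?r ?n) :: 'a)"
  define F where "F = (\<Prod>j<?r. fact (?n j) :: 'a)"
  have V0: "V \<noteq> 0" unfolding V_def using vandermonde_nonzero[of ?r ?n] mono by simp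
  have F0: "F \<noteq> 0" unfolding F_def by (simp add: prod_zero_iff)
  have eqm: "mat ?r ?r (\<lambda>(i,j). tz (bseq mono_seq) (int (?n j) - int i)) = mat ?r ?r (\<lambda>(i,j). monom (C i j) (?n j - i))"
  proof (rule eq_matI)
    fix i j assume "i < dim_row (mat ?r ?r (\<lambda>(i,j). monom (C i j) (?n j - i)))"
      "j < dim_col (mat ?r ?r (\<lambda>(i,j). monom (C i j) (?n j - i)))"
    hence i: "i < ?r" and j: "j < ?r" by simp_all
    show "mat ?r ?r (\<lambda>(i,j). tz (bseq mono_seq) (int (?n j) - int i)) $$ (i,j) = mat ?r ?r (\<lambda>(i,j). monom (C i j) (?n j - i)) $$ (i,j)"
    proof (cases "i \<le> ?n j")
      case True
      hence "nat (int (?n j) - int i) = ?n j - i" by simp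
      thus ?thesis using i j True by (simp add: tz_def bseq_mono C_def)
    qed (use i j in \<open>simp add: tz_def C_def\<close>)
  qed simp_all
  have D: "det (mat ?r ?r (\<lambda>(i,j). tz (bseq mono_seq) (int (?n j) - int i))) = monom (det (mat ?r ?r (\<lambda>(i,j). C i j))) ?E"
    unfolding eqm by (rule monom_det) (auto simp: C_def split: if_splits)
  have eqp: "mat ?r ?r (\<lambda>(i,j). poly (npoly of_nat i) (of_nat (?n j) :: 'a)) = mat ?r ?r (\<lambda>(i,j). (\<lambda>_. 1) i * (\<lambda>j. fact (?n j)) j * mat ?r ?r (\<lambda>(i,j). C i j) $$ (i,j))"
    by (rule eq_matI) (auto simp: poly_npoly_nat C_def field_simps)
  have S: "det (mat ?r ?r (\<lambda>(i,j). (\<lambda>_. 1) i * (\<lambda>j. fact (?n j)) j * mat ?r ?r (\<lambda>(i,j). C i j) $$ (i,j))) =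
     (\<Prod>i<?r. (\<lambda>_. 1::'a) i) * (\<Prod>j<?r. (\<lambda>j. fact (?n j)) j) * det (mat ?r ?r (\<lambda>(i,j). C i j))"
    by (rule det_scale) simp
  have "det (mat ?r ?r (\<lambda>(i,j). poly (npoly of_nat i) (of_nat (?n j) :: 'a))) = F * det (mat ?r ?r (\<lambda>(i,j). C i j))"
    unfolding eqp S by (simp add: F_def)
  moreover have "det (mat ?r ?r (\<lambda>(i,j). poly (npoly of_nat i) (of_nat (?n j) :: 'a))) = V"
    by (simp add: det_npoly V_def vandermonde_def of_int_prod)
  ultimately have dC: "det (mat ?r ?r (\<lambda>(i,j). C i j)) = V / F" using F0 by (simp add: field_simps)
  have "wronskian_appell (mono_seq :: nat \<Rightarrow> 'a poly) lam = smult (inverse V * F) (monom (V / F) ?E)"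
    unfolding wa_formula[OF appell_mono] D dC V_def F_def ..
  also have "\<dots> = monom 1 ?E" using V0 F0 by (simp add: smult_monom field_simps)
  finally show ?thesis .
qed

lemma cst_one:
  assumes part: "is_partition lam"
  shows "(cst lam :: 'a::field_char_0) = 1"
proof -
  have "wronskian_appell (mono_seq :: nat \<Rightarrow> 'a poly) lam = smult (cst lam) (wronskian_appell mono_seq (conj_partition lam))"
    by (rule wa_dual[OF appell_mono appell_mono dual_mono part])
  moreover have "wronskian_appell (mono_seq :: nat \<Rightarrow> 'a poly) lam = monom 1 ((\<Sum>j<length lam. part_seq lam j) - (\<Sum>i<length lam. i))"
    by (rule wa_mono) (rule n_mono[OF part])
  moreover have "wronskian_appell (mono_seq :: nat \<Rightarrow> 'a poly) (conj_partition lam) =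
     monom 1 ((\<Sum>j<length (conj_partition lam). part_seq (conj_partition lam) j) - (\<Sum>i<length (conj_partition lam). i))"
    by (rule wa_mono) (rule n'_mono)
  ultimately have "monom 1 ((\<Sum>j<length lam. part_seq lam j) - (\<Sum>i<length lam. i)) =
     (monom (cst lam) ((\<Sum>j<length (conj_partition lam). part_seq (conj_partition lam) j) - (\<Sum>i<length (conj_partition lam). i)) :: 'a poly)"
    by (simp add: smult_monom)
  hence "coeff (monom 1 ((\<Sum>j<length lam. part_seq lam j) - (\<Sum>i<length lam. i)) :: 'a poly) ((\<Sum>j<length lam. part_seq lam j) - (\<Sum>i<length lam. i)) =
     coeff (monom (cst lam) ((\<Sum>j<length (conj_partition lam). part_seq (conj_partition lam) j) - (\<Sum>i<length (conj_partition lam). i))) ((\<Sum>j<length lam. part_seq lam j) - (\<Sum>i<length lam. i))"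
    by simp
  thus ?thesis by (auto split: if_splits)
qed

definition Bneg :: "(nat \<Rightarrow> 'a::field_char_0 poly) \<Rightarrow> 'a poly fps" where
  "Bneg A = Abs_fps (\<lambda>a. smult ((-1)^a) (bseq A a))"

definition Es :: "(nat \<Rightarrow> 'a::field_char_0 poly) \<Rightarrow> 'a poly fps" where
  "Es A = fps_right_inverse (Bneg A) 1"

definition estar :: "(nat \<Rightarrow> 'a::field_char_0 poly) \<Rightarrow> nat \<Rightarrow> 'a poly" where
  "estar A k = fps_nth (Es A) k"

definition Astar :: "(nat \<Rightarrow> 'a::field_char_0 poly) \<Rightarrow> nat \<Rightarrow> 'a poly" where
  "Astar A k = smult (fact k) (estar A k)"

lemma Bneg_Es:
  assumes "appell A" shows "Bneg A * Es A = 1"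
  unfolding Es_def
  by (rule fps_right_inverse) (use assms in \<open>simp add: Bneg_def bseq_def appell_def\<close>)

lemma dual_estar:
  assumes A: "appell A" shows "dualp (bseq A) (estar A)"
  unfolding dualp_def
proof
  fix m
  have "fps_nth (Bneg A * Es A) m = (\<Sum>a\<le>m. (-1)^a * bseq A a * estar A (m - a))"
    by (simp add: fps_mult_nth atLeast0AtMost Bneg_def estar_def neg_one_pow_poly)
  thus "(\<Sum>a\<le>m. (-1)^a * bseq A a * estar A (m - a)) = (if m = 0 then 1 else 0)"
    using Bneg_Es[OF A] by simp
qed

lemma bseq_Astar: "bseq (Astar A) = estar A"
  by (rule ext) (simp add: bseq_def Astar_def)

lemma pderiv_sum': "pderiv (sum f S) = (\<Sum>i\<in>S. pderiv (f i))"
  by (induction S rule: infinite_finite_induct) (simp_all add: pderiv_add)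

definition Dx :: "'a::field_char_0 poly fps \<Rightarrow> 'a poly fps" where
  "Dx f = Abs_fps (\<lambda>n. pderiv (fps_nth f n))"

lemma Dx_mult: "Dx (f * g) = Dx f * g + f * Dx g"
proof (rule fps_ext)
  fix n
  have "fps_nth (Dx (f * g)) n = (\<Sum>i=0..n. pderiv (fps_nth f i * fps_nth g (n - i)))"
    by (simp add: Dx_def fps_mult_nth pderiv_sum')
  also have "\<dots> = (\<Sum>i=0..n. pderiv (fps_nth f i) * fps_nth g (n - i) + fps_nth f i * pderiv (fps_nth g (n - i)))"
    by (rule sum.cong) (simp_all add: pderiv_mult ac_simps)
  also have "\<dots> = fps_nth (Dx f * g + f * Dx g) n"
    by (simp add: Dx_def fps_mult_nth sum.distrib)
  finally show "fps_nth (Dx (f * g)) n = fps_nth (Dx f * g + f * Dx g) n" .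
qed

lemma Dx_one: "Dx 1 = 0"
  by (rule fps_ext) (simp add: Dx_def)

lemma Dx_Bneg:
  assumes A: "appell A" shows "Dx (Bneg A) = - (fps_X * Bneg A)"
proof (rule fps_ext)
  fix n
  show "fps_nth (Dx (Bneg A)) n = fps_nth (- (fps_X * Bneg A)) n"
  proof (cases n)
    case 0
    thus ?thesis using A by (simp add: Dx_def Bneg_def bseq_def appell_def pderiv_smult)
  next
    case (Suc k)
    have "pderiv (A (Suc k)) = smult (of_nat (Suc k)) (A k)" using A unfolding appell_def
      by (metis diff_Suc_1 le_add1 plus_1_eq_Suc)
    moreover have ne': "(1 + of_nat k :: 'a) \<noteq> 0" by (metis of_nat_Suc of_nat_neq_0)
    moreover have sc: "(-1::'a)^k * (inverse (1 + of_nat k) * inverse (fact k)) * (1 + of_nat k) = (-1)^k * inverse (fact k)"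
    proof -
      have "(-1::'a)^k * (inverse (1 + of_nat k) * inverse (fact k)) * (1 + of_nat k) =
         (-1)^k * inverse (fact k) * (inverse (1 + of_nat k) * (1 + of_nat k))" by (simp only: ac_simps)
      also have "\<dots> = (-1)^k * inverse (fact k)" using ne' by simp
      finally show ?thesis .
    qed
    ultimately show ?thesis using Suc
      apply (simp add: Dx_def Bneg_def bseq_def pderiv_smult smult_smult)
      apply (simp only: sc)
      done
  qed
qed

lemma Dx_Es:
  assumes A: "appell A" shows "Dx (Es A) = fps_X * Es A"
proof -
  let ?B = "Bneg A" and ?E = "Es A"
  have BE: "?B * ?E = 1" by (rule Bneg_Es[OF A])
  have "0 = Dx (?B * ?E)" using BE Dx_one by simp
  also have "\<dots> = - (fps_X * ?B) * ?E + ?B * Dx ?E" by (simp add: Dx_mult Dx_Bneg[OF A])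
  finally have h: "- (fps_X * ?B) * ?E + ?B * Dx ?E = 0" by simp
  have h2: "?B * Dx ?E = fps_X * ?B * ?E"
    using h by (simp only: add_eq_0_iff minus_mult_left minus_minus)
  have "Dx ?E = (?B * ?E) * Dx ?E" by (simp only: BE mult_1_left)
  also have "\<dots> = ?E * (?B * Dx ?E)" by (simp only: ac_simps)
  also have "\<dots> = ?E * (fps_X * ?B * ?E)" by (simp only: h2)
  also have "\<dots> = fps_X * ?E * (?B * ?E)" by (simp only: ac_simps)
  also have "\<dots> = fps_X * ?E" by (simp only: BE mult_1_right)
  finally show ?thesis .
qed

lemma estar_deriv:
  assumes A: "appell A" shows "pderiv (estar A (Suc n)) = estar A n"
proof -
  have "fps_nth (Dx (Es A)) (Suc n) = fps_nth (fps_X * Es A) (Suc n)" using Dx_Es[OF A] by simp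
  thus ?thesis by (simp add: Dx_def estar_def)
qed

lemma estar0: "estar A 0 = 1"
  by (simp add: estar_def Es_def)

lemma appell_Astar:
  assumes A: "appell A" shows "appell (Astar A)"
  unfolding appell_def
proof (intro conjI allI impI)
  show "Astar A 0 = 1" by (simp add: Astar_def estar0)
  fix n :: nat assume "n \<ge> 1"
  then obtain k where n: "n = Suc k" by (cases n) auto
  show "pderiv (Astar A n) = smult (of_nat n) (Astar A (n - 1))"
    using estar_deriv[OF A, of k] n by (simp add: Astar_def pderiv_smult smult_smult)
qed

lemma funpow_max: "(max (x::nat) ^^ n) a = (if n = 0 then a else max x a)"
  by (induction n) auto

lemma conj_rep: "conj_partition (replicate n 1) = (if n = 0 then [] else [n])"
  by (cases "n = 0") (auto simp: conj_partition_def funpow_max filter_replicate)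

lemma partition_rep: "is_partition (replicate n 1)"
  unfolding is_partition_def by (simp add: sorted_wrt_iff_nth_less)

lemma wa_nil: "wronskian_appell X [] = 1"
  by (simp add: wronskian_appell_def wronskian_def vandermonde_def)

lemma wa_single: "wronskian_appell X [n] = X n"
  by (simp add: wronskian_appell_def wronskian_def vandermonde_def det_single part_seq_def)

lemma appell_dual_eq:
  assumes A: "appell A" shows "appell_dual A = Astar A"
proof
  fix n
  have "appell_dual A n = wronskian_appell A (replicate n 1)" by (simp add: appell_dual_def)
  also have "\<dots> = smult (cst (replicate n 1)) (wronskian_appell (Astar A) (conj_partition (replicate n 1)))"
    by (rule wa_dual[OF appell_Astar[OF A] A _ partition_rep]) (simp add: bseq_Astar dual_estar[OF A])
  also have "\<dots> = wronskian_appell (Astar A) (conj_partition (replicate n 1))"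
  proof -
    have c1: "cst (replicate n 1) = (1::'a)" by (rule cst_one[OF partition_rep])
    show ?thesis unfolding c1 by simp
  qed
  also have "\<dots> = Astar A n"
  proof (cases n)
    case 0
    thus ?thesis by (simp add: conj_partition_def wa_nil Astar_def estar0)
  next
    case (Suc m)
    hence "conj_partition (replicate n 1) = [n]" using conj_rep[of n] by simp
    thus ?thesis by (simp only: wa_single)
  qed
  finally show "appell_dual A n = Astar A n" .
qed

lemma egf_nth:
  assumes "appell_egf X f" shows "fps_nth f k = poly (bseq X k) 0"
proof -
  have "fps_nth (Abs_fps (\<lambda>k. smult (inverse (fact k)) (X k))) k =
     fps_nth (Abs_fps (\<lambda>k. monom (inverse (fact k)) k) * Abs_fps (\<lambda>k. [:fps_nth f k:])) k"
    using assms unfolding appell_egf_def by simp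
  hence "bseq X k = (\<Sum>i=0..k. monom (inverse (fact i)) i * [:fps_nth f (k - i):])"
    by (simp add: fps_mult_nth bseq_def)
  hence "poly (bseq X k) 0 = (\<Sum>i=0..k. inverse (fact i) * 0 ^ i * fps_nth f (k - i))"
    by (simp add: poly_sum poly_monom ac_simps)
  also have "\<dots> = inverse (fact 0) * 0 ^ 0 * fps_nth f (k - 0) + (\<Sum>i=Suc 0..k. inverse (fact i) * 0 ^ i * fps_nth f (k - i))"
    by (rule sum.atLeast_Suc_atMost) simp
  also have "(\<Sum>i=Suc 0..k. inverse (fact i) * (0::'a) ^ i * fps_nth f (k - i)) = 0"
    by (rule sum.neutral) auto
  finally show ?thesis by simp
qed

theorem theorem5p5:
  fixes A :: "nat \<Rightarrow> 'a::field_char_0 poly"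
  assumes "appell A"
  shows "appell (appell_dual A) \<and>
         (\<forall>lam. is_partition lam \<longrightarrow>
           wronskian_appell (appell_dual A) lam = wronskian_appell A (conj_partition lam)) \<and>
         (\<forall>fA fAs. appell_egf A fA \<and> appell_egf (appell_dual A) fAs \<longrightarrow>
           fAs = inverse (fps_compose fA (- fps_X)))"
proof -
  have D: "appell_dual A = Astar A" by (rule appell_dual_eq[OF assms])
  have a: "appell (appell_dual A)" unfolding D by (rule appell_Astar[OF assms])
  have b: "\<forall>lam. is_partition lam \<longrightarrow>
           wronskian_appell (appell_dual A) lam = wronskian_appell A (conj_partition lam)"
  proof (intro allI impI)
    fix lam assume p: "is_partition lam"
    have "wronskian_appell (Astar A) lam = smult (cst lam) (wronskian_appell A (conj_partition lam))"
      by (rule wa_dual[OF assms appell_Astar[OF assms] _ p])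
         (simp add: bseq_Astar dualp_sym[OF dual_estar[OF assms]])
    moreover have "(cst lam :: 'a) = 1" by (rule cst_one[OF p])
    ultimately show "wronskian_appell (appell_dual A) lam = wronskian_appell A (conj_partition lam)"
      unfolding D by simp
  qed
  have c: "\<forall>fA fAs. appell_egf A fA \<and> appell_egf (appell_dual A) fAs \<longrightarrow>
           fAs = inverse (fps_compose fA (- fps_X))"
  proof (intro allI impI)
    fix fA fAs assume h: "appell_egf A fA \<and> appell_egf (appell_dual A) fAs"
    have nA: "\<And>k. fps_nth fA k = poly (bseq A k) 0" using h egf_nth by blast
    have nS: "\<And>k. fps_nth fAs k = poly (estar A k) 0"
      using h egf_nth[of "Astar A" fAs] D by (simp add: bseq_Astar)
    have "fps_compose fA (- fps_X) * fAs = 1"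
    proof (rule fps_ext)
      fix m
      have "fps_nth (fps_compose fA (- fps_X) * fAs) m =
          (\<Sum>a=0..m. (-1)^a * poly (bseq A a) 0 * poly (estar A (m - a)) 0)"
        by (simp add: fps_mult_nth fps_compose_uminus' nA nS)
      also have "\<dots> = poly (\<Sum>a\<le>m. (-1)^a * bseq A a * estar A (m - a)) 0"
        by (simp add: poly_sum atLeast0AtMost)
      also have "\<dots> = fps_nth 1 m" using dual_estar[OF assms] by (simp add: dualp_def)
      finally show "fps_nth (fps_compose fA (- fps_X) * fAs) m = fps_nth 1 m" .
    qed
    thus "fAs = inverse (fps_compose fA (- fps_X))" by (simp add: fps_inverse_unique)
  qed
  show ?thesis using a b c by blast
qed

end
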